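(* Assume: $g(x,u)\in[0,\infty]$ for all $x\in X$, $u\in U(x)$; $S^0\subset X$ and a stationary policy $\mu^0$ satisfy $f(x,\mu^0(x))\in S^0$ for all $x\in S^0$; for each $x\in X$, $\bar U(x)\subset U(x)$ is nonempty, with $\mu^0(x)\in\bar U(x)$ for all $x\in S^0$; and for every $J:X\to[0,\infty]$ and every $x\in X$ the infimum $\inf_{u\in\bar U(x)}\{g(x,u)+J(f(x,u))\}$ is attained. Let $\bar J_{S^0}(x)=J_{\mu^0}(x)$ for $x\in S^0$ and $\bar J_{S^0}(x)=\infty$ otherwise. Fix $\ell\ge1$, and let $\tilde J_{S^0}(x)$ be the optimal value of minimizing $\sum_{k=0}^{\ell-1}g(x_k,u_k)+\bar J_{S^0}(x_\ell)$ over $(u_0,\dots,u_{\ell-1})$ subject to $x_0=x$, $x_{k+1}=f(x_k,u_k)$, $u_k\in\bar U(x_k)$ for $k=0,\dots,\ell-1$, and let $\tilde\mu(x)=\tilde u_0$, the first control of a minimizing sequence $(\tilde u_0,\dots,\tilde u_{\ell-1})$ of this problem. Then $$J_{\tilde\mu}(x)\le\tilde J_{S^0}(x)\le\bar J_{S^0}(x)\quad\text{for all }x\in X.$$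
   Context: Deterministic infinite-horizon problem: arbitrary state space $X$ and control space $U$, dynamics $x_{k+1}=f(x_k,u_k)$ with $f:X\times U\to X$, nonempty control constraint sets $U(x)\subset U$. A stationary policy is a map $\mu:X\to U$ with $\mu(x)\in U(x)$ for all $x$; its cost function is $J_\mu(x_0)=\sum_{k=0}^\infty g(x_k,\mu(x_k))\in[0,\infty]$, where $x_{k+1}=f(x_k,\mu(x_k))$. Equivalently to the definition above, $\tilde J_{S^0}=J_\ell$ where $J_0=\bar J_{S^0}$, $J_{k+1}(x)=\min_{u\in\bar U(x)}\{g(x,u)+J_k(f(x,u))\}$, and $\tilde\mu(x)\in\arg\min_{u\in\bar U(x)}\{g(x,u)+J_{\ell-1}(f(x,u))\}$. *)

theory Defs
  imports "HOL-Analysis.Analysis"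
begin

definition pol_traj :: "('x \<Rightarrow> 'u \<Rightarrow> 'x) \<Rightarrow> ('x \<Rightarrow> 'u) \<Rightarrow> 'x \<Rightarrow> nat \<Rightarrow> 'x" where
  "pol_traj f mu x0 k = ((\<lambda>y. f y (mu y)) ^^ k) x0"

definition J_pol :: "('x \<Rightarrow> 'u \<Rightarrow> 'x) \<Rightarrow> ('x \<Rightarrow> 'u \<Rightarrow> ennreal) \<Rightarrow> ('x \<Rightarrow> 'u) \<Rightarrow> 'x \<Rightarrow> ennreal" where
  "J_pol f g mu x0 = (\<Sum>k. g (pol_traj f mu x0 k) (mu (pol_traj f mu x0 k)))"

fun ctraj :: "('x \<Rightarrow> 'u \<Rightarrow> 'x) \<Rightarrow> 'x \<Rightarrow> (nat \<Rightarrow> 'u) \<Rightarrow> nat \<Rightarrow> 'x" where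
  "ctraj f x0 us 0 = x0"
| "ctraj f x0 us (Suc k) = f (ctraj f x0 us k) (us k)"

definition Jbar :: "('x \<Rightarrow> 'u \<Rightarrow> 'x) \<Rightarrow> ('x \<Rightarrow> 'u \<Rightarrow> ennreal) \<Rightarrow> 'x set \<Rightarrow> ('x \<Rightarrow> 'u) \<Rightarrow> 'x \<Rightarrow> ennreal" where
  "Jbar f g S0 mu0 x = (if x \<in> S0 then J_pol f g mu0 x else \<infinity>)"

text \<open>Feasible control sequences for the l-step lookahead problem (only the first l controls matter).\<close>
definition feasible_seq :: "('x \<Rightarrow> 'u \<Rightarrow> 'x) \<Rightarrow> ('x \<Rightarrow> 'u set) \<Rightarrow> nat \<Rightarrow> 'x \<Rightarrow> (nat \<Rightarrow> 'u) \<Rightarrow> bool" where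
  "feasible_seq f Ubar l x us = (\<forall>k<l. us k \<in> Ubar (ctraj f x us k))"

definition la_cost :: "('x \<Rightarrow> 'u \<Rightarrow> 'x) \<Rightarrow> ('x \<Rightarrow> 'u \<Rightarrow> ennreal) \<Rightarrow> 'x set \<Rightarrow> ('x \<Rightarrow> 'u) \<Rightarrow> nat \<Rightarrow> 'x \<Rightarrow> (nat \<Rightarrow> 'u) \<Rightarrow> ennreal" where
  "la_cost f g S0 mu0 l x us =
     (\<Sum>k<l. g (ctraj f x us k) (us k)) + Jbar f g S0 mu0 (ctraj f x us l)"

definition Jtilde :: "('x \<Rightarrow> 'u \<Rightarrow> 'x) \<Rightarrow> ('x \<Rightarrow> 'u \<Rightarrow> ennreal) \<Rightarrow> ('x \<Rightarrow> 'u set) \<Rightarrow> 'x set \<Rightarrow> ('x \<Rightarrow> 'u) \<Rightarrow> nat \<Rightarrow> 'x \<Rightarrow> ennreal" where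
  "Jtilde f g Ubar S0 mu0 l x =
     (INF us \<in> {us. feasible_seq f Ubar l x us}. la_cost f g S0 mu0 l x us)"

end

theory Submission
  imports Defs
begin

lemma ennreal_suminf_Suc:
  fixes h :: "nat \<Rightarrow> ennreal"
  shows "suminf h = h 0 + (\<Sum>n. h (Suc n))"
proof -
  have "h sums ((\<Sum>n. h (Suc n)) + h 0)"
    by (rule sums_Suc) (rule summable_sums[OF summableI])
  then show ?thesis using sums_unique by (metis add.commute)
qed

lemma pol_traj_0[simp]: "pol_traj f mu x 0 = x"
  by (simp add: pol_traj_def)

lemma pol_traj_Suc: "pol_traj f mu x (Suc k) = pol_traj f mu (f x (mu x)) k"
  by (simp add: pol_traj_def funpow_Suc_right del: funpow.simps)

lemma J_pol_step: "J_pol f g mu x = g x (mu x) + J_pol f g mu (f x (mu x))"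
  unfolding J_pol_def
  by (subst ennreal_suminf_Suc) (simp add: pol_traj_Suc)

lemma J_pol_split:
  "J_pol f g mu x = (\<Sum>k<n. g (pol_traj f mu x k) (mu (pol_traj f mu x k)))
     + J_pol f g mu (pol_traj f mu x n)"
proof (induction n arbitrary: x)
  case 0 then show ?case by simp
next
  case (Suc n)
  have "J_pol f g mu x = g x (mu x) + J_pol f g mu (f x (mu x))" by (rule J_pol_step)
  also have "\<dots> = g x (mu x) + ((\<Sum>k<n. g (pol_traj f mu (f x (mu x)) k) (mu (pol_traj f mu (f x (mu x)) k)))
     + J_pol f g mu (pol_traj f mu (f x (mu x)) n))" by (subst Suc.IH[of "f x (mu x)"]) (rule refl)
  also have "\<dots> = (\<Sum>k<Suc n. g (pol_traj f mu x k) (mu (pol_traj f mu x k)))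
     + J_pol f g mu (pol_traj f mu x (Suc n))"
    by (simp add: sum.lessThan_Suc_shift pol_traj_Suc add.assoc del: sum.lessThan_Suc)
  finally show ?case .
qed

lemma ctraj_pol: "ctraj f x (\<lambda>k. mu (pol_traj f mu x k)) k = pol_traj f mu x k"
  by (induction k) (simp_all add: pol_traj_def)

lemma pol_traj_inv: "\<forall>x\<in>S. f x (mu x) \<in> S \<Longrightarrow> x \<in> S \<Longrightarrow> pol_traj f mu x k \<in> S"
  by (induction k arbitrary: x) (simp_all add: pol_traj_Suc)

lemma ctraj_shift:
  "(\<forall>j<k. us' j = us (Suc j)) \<Longrightarrow> ctraj f (f x (us 0)) us' k = ctraj f x us (Suc k)"
proof (induction k)
  case 0 then show ?case by simp
next
  case (Suc k)
  have "ctraj f (f x (us 0)) us' k = ctraj f x us (Suc k)" using Suc.prems by (intro Suc.IH) auto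
  moreover have "us' k = us (Suc k)" using Suc.prems by auto
  ultimately show ?case by simp
qed


theorem proposition5:
  fixes f :: "'x \<Rightarrow> 'u \<Rightarrow> 'x" and g :: "'x \<Rightarrow> 'u \<Rightarrow> ennreal"
    and U Ubar :: "'x \<Rightarrow> 'u set" and S0 :: "'x set"
    and mu0 mut :: "'x \<Rightarrow> 'u" and l :: nat
  assumes U_ne: "\<forall>x. U x \<noteq> {}"
    and mu0_pol: "\<forall>x. mu0 x \<in> U x"
    and S0_inv: "\<forall>x\<in>S0. f x (mu0 x) \<in> S0"
    and Ubar_sub: "\<forall>x. Ubar x \<subseteq> U x"
    and Ubar_ne: "\<forall>x. Ubar x \<noteq> {}"
    and mu0_Ubar: "\<forall>x\<in>S0. mu0 x \<in> Ubar x"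
    and attained: "\<forall>(J :: 'x \<Rightarrow> ennreal) x. \<exists>u\<in>Ubar x.
         g x u + J (f x u) = (INF v\<in>Ubar x. g x v + J (f x v))"
    and l_pos: "l \<ge> 1"
    and mut_def: "\<forall>x. \<exists>us. feasible_seq f Ubar l x us
         \<and> la_cost f g S0 mu0 l x us = Jtilde f g Ubar S0 mu0 l x
         \<and> mut x = us 0"
  shows "\<forall>x. J_pol f g mut x \<le> Jtilde f g Ubar S0 mu0 l x
           \<and> Jtilde f g Ubar S0 mu0 l x \<le> Jbar f g S0 mu0 x"
proof -
  define Jt where "Jt = Jtilde f g Ubar S0 mu0 l"
  obtain m where lm: "l = Suc m" using l_pos by (cases l) auto
  have step: "g x (mut x) + Jt (f x (mut x)) \<le> Jt x" for x
  proof -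
    obtain us where fs: "feasible_seq f Ubar l x us"
      and lc: "la_cost f g S0 mu0 l x us = Jt x" and mu: "mut x = us 0"
      using mut_def Jt_def by blast
    define xl where "xl = ctraj f x us l"
    show ?thesis
    proof (cases "xl \<in> S0")
      case False
      then have "Jt x = \<infinity>" using lc by (simp add: la_cost_def Jbar_def xl_def)
      then show ?thesis by simp
    next
      case True
      define us' where "us' = (\<lambda>k. if k < m then us (Suc k) else mu0 xl)"
      have sh: "ctraj f (f x (us 0)) us' k = ctraj f x us (Suc k)" if "k \<le> m" for k
        using that by (intro ctraj_shift) (auto simp: us'_def)
      have shl: "ctraj f (f x (us 0)) us' l = f xl (mu0 xl)"
        using sh[of m] by (simp add: lm us'_def xl_def)
      have feas: "feasible_seq f Ubar l (f x (us 0)) us'"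
        unfolding feasible_seq_def
      proof (intro allI impI)
        fix k assume k: "k < l"
        show "us' k \<in> Ubar (ctraj f (f x (us 0)) us' k)"
        proof (cases "k < m")
          case True
          then show ?thesis using fs[unfolded feasible_seq_def, rule_format, of "Suc k"] sh[of k] lm by (simp add: us'_def)
        next
          case False
          then have "k = m" using k lm by simp
          then show ?thesis using sh[of m] mu0_Ubar True lm by (simp add: us'_def xl_def)
        qed
      qed
      have tail: "(\<Sum>k<l. g (ctraj f (f x (us 0)) us' k) (us' k))
          = (\<Sum>k<m. g (ctraj f x us (Suc k)) (us (Suc k))) + g xl (mu0 xl)"
        using sh by (simp add: lm us'_def xl_def)
      have "Jt (f x (us 0)) \<le> la_cost f g S0 mu0 l (f x (us 0)) us'"
        using INF_lower[of us' "{vs. feasible_seq f Ubar l (f x (us 0)) vs}" "la_cost f g S0 mu0 l (f x (us 0))"] feas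
        unfolding Jt_def Jtilde_def by auto
      also have "\<dots> = (\<Sum>k<m. g (ctraj f x us (Suc k)) (us (Suc k))) + (g xl (mu0 xl) + J_pol f g mu0 (f xl (mu0 xl)))"
        unfolding la_cost_def tail shl using S0_inv True by (simp add: Jbar_def add.assoc)
      also have "\<dots> = (\<Sum>k<m. g (ctraj f x us (Suc k)) (us (Suc k))) + Jbar f g S0 mu0 xl"
        using True by (simp add: Jbar_def J_pol_step[symmetric])
      finally have "g x (us 0) + Jt (f x (us 0)) \<le> g x (us 0) + ((\<Sum>k<m. g (ctraj f x us (Suc k)) (us (Suc k))) + Jbar f g S0 mu0 xl)"
        by (rule add_left_mono)
      also have "\<dots> = la_cost f g S0 mu0 l x us"
        unfolding la_cost_def xl_def lm
        by (simp add: sum.lessThan_Suc_shift add.assoc del: sum.lessThan_Suc)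
      finally show ?thesis using lc mu by simp
    qed
  qed
  have part1: "J_pol f g mut x \<le> Jt x" for x
  proof -
    have ind: "(\<Sum>k<n. g (pol_traj f mut x k) (mut (pol_traj f mut x k))) + Jt (pol_traj f mut x n) \<le> Jt x" for n
    proof (induction n arbitrary: x)
      case 0 then show ?case by simp
    next
      case (Suc n)
      have "(\<Sum>k<Suc n. g (pol_traj f mut x k) (mut (pol_traj f mut x k))) + Jt (pol_traj f mut x (Suc n))
        = g x (mut x) + ((\<Sum>k<n. g (pol_traj f mut (f x (mut x)) k) (mut (pol_traj f mut (f x (mut x)) k))) + Jt (pol_traj f mut (f x (mut x)) n))"
        by (simp add: sum.lessThan_Suc_shift pol_traj_Suc add.assoc del: sum.lessThan_Suc)
      also have "\<dots> \<le> g x (mut x) + Jt (f x (mut x))"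
        by (rule add_left_mono) (rule Suc.IH)
      also have "\<dots> \<le> Jt x" by (rule step)
      finally show ?case .
    qed
    show ?thesis unfolding J_pol_def
    proof (rule suminf_le_const[OF summableI])
      fix n
      show "(\<Sum>k<n. g (pol_traj f mut x k) (mut (pol_traj f mut x k))) \<le> Jt x"
        by (rule order_trans[OF _ ind[of n]]) simp
    qed
  qed
  have part2: "Jt x \<le> Jbar f g S0 mu0 x" for x
  proof (cases "x \<in> S0")
    case False then show ?thesis by (simp add: Jbar_def)
  next
    case True
    define us where "us = (\<lambda>k. mu0 (pol_traj f mu0 x k))"
    have ct: "ctraj f x us k = pol_traj f mu0 x k" for k
      unfolding us_def by (rule ctraj_pol)
    have inS: "pol_traj f mu0 x k \<in> S0" for k using pol_traj_inv[of S0 f mu0 x k, OF S0_inv True] .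
    have feas: "feasible_seq f Ubar l x us"
      unfolding feasible_seq_def ct unfolding us_def using inS mu0_Ubar by blast
    have "Jt x \<le> la_cost f g S0 mu0 l x us"
      using INF_lower[of us "{us. feasible_seq f Ubar l x us}" "la_cost f g S0 mu0 l x"] feas
      unfolding Jt_def Jtilde_def by auto
    also have "\<dots> = (\<Sum>k<l. g (pol_traj f mu0 x k) (mu0 (pol_traj f mu0 x k))) + J_pol f g mu0 (pol_traj f mu0 x l)"
      unfolding la_cost_def ct unfolding Jbar_def us_def using inS by simp
    also have "\<dots> = J_pol f g mu0 x" by (rule J_pol_split[symmetric])
    also have "\<dots> = Jbar f g S0 mu0 x" using True by (simp add: Jbar_def)
    finally show ?thesis .
  qed
  show ?thesis using part1 part2 Jt_def by simp
qed

end
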